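(* Let $Q$ be upward-looking with parameter $p_0$ and mean $\mu$. Let $X_1,X_2,\dots$ be i.i.d. $\sim Q$, $S_n=\sum_{i=1}^nX_i$ and $M_n=S_n/n$. Then for any $\delta\le0.05$, $$\mathbb{P}\bigl[\exists n:\ M_n<\mu-\delta\bigr]\le\exp(-p_0\delta/4).$$
   Context: A distribution $Q$ with $\mathbb{E}[Q]=\mu$ such that $Q-\mu$ is $1$-subgaussian ($\mathbb{E}[e^{s(X-\mu)}]\le e^{s^2/2}$ for $X\sim Q$, all real $s$) is called upward-looking with parameter $p_0$ if, with $X_i$ i.i.d. $\sim Q$, $S_n=\sum_{i\le n}X_i$, $R_n(\theta)=S_n-n\theta$ and $\tau(\theta)=\inf\{n\ge1:R_n(\theta)<0\text{ or }R_n(\theta)\ge1\}$, for every $\theta<\mu$ at least one of the following holds: (a) $\mathbb{P}[R_{\tau(\theta)}(\theta)\ge1]\ge p_0$; (b) $\mathbb{E}[(X_1-\theta)\mathbf 1(X_1\ge\theta)]\ge p_0$. *)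

theory Defs
  imports "HOL-Probability.Probability"
begin

definition subgaussian_mean :: "real measure \<Rightarrow> real \<Rightarrow> bool" where
  "subgaussian_mean Q mu \<longleftrightarrow>
     prob_space Q \<and> sets Q = sets borel \<and>
     integrable Q (\<lambda>x. x) \<and> (\<integral>x. x \<partial>Q) = mu \<and>
     (\<forall>s::real. integrable Q (\<lambda>x. exp (s * (x - mu))) \<and>
                (\<integral>x. exp (s * (x - mu)) \<partial>Q) \<le> exp (s\<^sup>2 / 2))"

text \<open>Canonical i.i.d. sequence: coordinates of the infinite product measure;
  X_(i+1) is coordinate i, so S_n = sum of the first n coordinates.\<close>
definition iid_space :: "real measure \<Rightarrow> (nat \<Rightarrow> real) measure" where
  "iid_space Q = PiM UNIV (\<lambda>_. Q)"

definition walk :: "(nat \<Rightarrow> real) \<Rightarrow> real \<Rightarrow> nat \<Rightarrow> real" where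
  "walk \<omega> \<theta> n = (\<Sum>i<n. \<omega> i) - real n * \<theta>"

text \<open>Event {R_tau(theta) >= 1}: the first n >= 1 with R_n < 0 or R_n >= 1 exists
  and has R_n >= 1.\<close>
definition exits_up :: "real \<Rightarrow> (nat \<Rightarrow> real) \<Rightarrow> bool" where
  "exits_up \<theta> \<omega> \<longleftrightarrow>
     (\<exists>n\<ge>1. walk \<omega> \<theta> n \<ge> 1 \<and>
        (\<forall>m. 1 \<le> m \<and> m < n \<longrightarrow> 0 \<le> walk \<omega> \<theta> m \<and> walk \<omega> \<theta> m < 1))"

definition upward_looking :: "real measure \<Rightarrow> real \<Rightarrow> real \<Rightarrow> bool" where
  "upward_looking Q mu p0 \<longleftrightarrow>
     subgaussian_mean Q mu \<and>
     (\<forall>\<theta> < mu.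
        measure (iid_space Q) {\<omega> \<in> space (iid_space Q). exits_up \<theta> \<omega>} \<ge> p0
      \<or> (\<integral>x. (x - \<theta>) * indicator {\<theta>..} x \<partial>Q) \<ge> p0)"

end

theory Submission
  imports Defs
begin

lemma exp_neg_le_taylor:
  fixes x :: real assumes "0 \<le> x"
  shows "exp (-x) \<le> 1 - x + x^2/2"
proof -
  let ?f = "\<lambda>t::real. 1 - t + t^2/2 - exp (-t)"
  have "?f 0 \<le> ?f x"
  proof (rule DERIV_nonneg_imp_nondecreasing[OF assms])
    fix t :: real assume "0 \<le> t" "t \<le> x"
    have "(?f has_real_derivative (-1 + t + exp (-t))) (at t)"
      by (auto intro!: derivative_eq_intros simp: power2_eq_square)
    moreover have "0 \<le> -1 + t + exp (-t)" using exp_ge_add_one_self[of "-t"] by linarith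
    ultimately show "\<exists>y. (?f has_real_derivative y) (at t) \<and> 0 \<le> y" by blast
  qed
  then show ?thesis by simp
qed

lemma one_minus_exp_ge:
  fixes x :: real assumes "0 \<le> x"
  shows "x - x^2/2 \<le> 1 - exp (-x)"
  using exp_neg_le_taylor[OF assms] by linarith

definition Bd :: "real \<Rightarrow> nat \<Rightarrow> (nat \<Rightarrow> real) \<Rightarrow> bool" where
  "Bd \<theta> n w \<longleftrightarrow> (\<exists>m. 1 \<le> m \<and> m \<le> n \<and> walk w \<theta> m < 0)"

definition Up :: "real \<Rightarrow> nat \<Rightarrow> (nat \<Rightarrow> real) \<Rightarrow> bool" where
  "Up \<theta> n w \<longleftrightarrow> (\<exists>k. 1 \<le> k \<and> k \<le> n \<and> 1 \<le> walk w \<theta> k \<and>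
      (\<forall>m. 1 \<le> m \<and> m < k \<longrightarrow> 0 \<le> walk w \<theta> m \<and> walk w \<theta> m < 1))"

lemma walk_Suc: "walk w \<theta> (Suc n) = walk w \<theta> n + (w n - \<theta>)"
  by (simp add: walk_def algebra_simps)

lemma walk_cong: "(\<And>i. i < m \<Longrightarrow> w i = w' i) \<Longrightarrow> walk w \<theta> m = walk w' \<theta> m"
  by (simp add: walk_def)

lemma walk_upd_le: "m \<le> n \<Longrightarrow> walk (w(n := y)) \<theta> m = walk w \<theta> m"
  by (rule walk_cong) auto

lemma walk_upd_Suc: "walk (w(n := y)) \<theta> (Suc n) = walk w \<theta> n + (y - \<theta>)"
  by (simp add: walk_Suc walk_upd_le)

lemma Bd_cong: "(\<And>i. i < n \<Longrightarrow> w i = w' i) \<Longrightarrow> Bd \<theta> n w = Bd \<theta> n w'"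
proof -
  assume h: "\<And>i. i < n \<Longrightarrow> w i = w' i"
  have "\<And>m. m \<le> n \<Longrightarrow> walk w \<theta> m = walk w' \<theta> m"
    by (rule walk_cong) (use h in auto)
  then show ?thesis unfolding Bd_def by auto
qed

lemma Up_cong: "(\<And>i. i < n \<Longrightarrow> w i = w' i) \<Longrightarrow> Up \<theta> n w = Up \<theta> n w'"
proof -
  assume h: "\<And>i. i < n \<Longrightarrow> w i = w' i"
  have "\<And>m. m \<le> n \<Longrightarrow> walk w \<theta> m = walk w' \<theta> m"
    by (rule walk_cong) (use h in auto)
  then have e: "\<And>m. m \<le> n \<Longrightarrow> walk w' \<theta> m = walk w \<theta> m" by simp
  show ?thesis unfolding Up_def
  proof (rule ex_cong1)
    fix k
    show "(1 \<le> k \<and> k \<le> n \<and> 1 \<le> walk w \<theta> k \<and> (\<forall>m. 1 \<le> m \<and> m < k \<longrightarrow> 0 \<le> walk w \<theta> m \<and> walk w \<theta> m < 1)) =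
          (1 \<le> k \<and> k \<le> n \<and> 1 \<le> walk w' \<theta> k \<and> (\<forall>m. 1 \<le> m \<and> m < k \<longrightarrow> 0 \<le> walk w' \<theta> m \<and> walk w' \<theta> m < 1))"
      using e by (metis less_imp_le_nat order_trans)
  qed
qed

lemma Bd_0[simp]: "\<not> Bd \<theta> 0 w" by (simp add: Bd_def)
lemma Up_0[simp]: "\<not> Up \<theta> 0 w" by (simp add: Up_def)

lemma Bd_Suc: "Bd \<theta> (Suc n) w \<longleftrightarrow> Bd \<theta> n w \<or> walk w \<theta> (Suc n) < 0"
  unfolding Bd_def using le_Suc_eq by auto

lemma Up_Suc: "Up \<theta> (Suc n) w \<longleftrightarrow> Up \<theta> n w \<or>
   (1 \<le> walk w \<theta> (Suc n) \<and> (\<forall>m. 1 \<le> m \<and> m \<le> n \<longrightarrow> 0 \<le> walk w \<theta> m \<and> walk w \<theta> m < 1))"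
  unfolding Up_def
  apply (rule iffI)
   apply (metis le_Suc_eq less_Suc_eq_le)
  apply (elim disjE exE)
   apply (metis le_Suc_eq)
  apply (rule exI[of _ "Suc n"])
  apply (auto simp: less_Suc_eq_le)
  done

lemma inside:
  assumes "\<not> Bd \<theta> n w" "\<not> Up \<theta> n w" "1 \<le> m" "m \<le> n"
  shows "0 \<le> walk w \<theta> m \<and> walk w \<theta> m < 1"
  using assms
proof (induction n arbitrary: m)
  case 0 then show ?case by simp
next
  case (Suc n)
  have nb: "\<not> Bd \<theta> n w" and nu: "\<not> Up \<theta> n w" using Suc.prems Bd_Suc Up_Suc by blast+
  show ?case
  proof (cases "m \<le> n")
    case True then show ?thesis using Suc.IH[OF nb nu] Suc.prems by blast
  next
    case False
    then have m: "m = Suc n" using Suc.prems by simp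
    have "0 \<le> walk w \<theta> (Suc n)" using Suc.prems(1) Bd_Suc by force
    moreover have "walk w \<theta> (Suc n) < 1"
      using Suc.prems(2) Up_Suc Suc.IH[OF nb nu] by force
    ultimately show ?thesis using m by simp
  qed
qed

locale sgctx =
  fixes Q :: "real measure" and mu \<delta> :: real
  assumes sg: "subgaussian_mean Q mu" and dpos: "0 < \<delta>"
begin

lemma Q_prob: "prob_space Q" using sg by (simp add: subgaussian_mean_def)
lemma Q_sets: "sets Q = sets borel" using sg by (simp add: subgaussian_mean_def)
lemma Q_space: "space Q = UNIV" using sets_eq_imp_space_eq[OF Q_sets] by simp

lemma Q_mgf: "integrable Q (\<lambda>x. exp (s * (x - mu)))" "(\<integral>x. exp (s * (x - mu)) \<partial>Q) \<le> exp (s\<^sup>2 / 2)"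
  using sg by (auto simp: subgaussian_mean_def)

lemma meas_Q: "f \<in> measurable borel N \<Longrightarrow> f \<in> measurable Q N"
  using measurable_cong_sets[OF Q_sets refl] by blast

lemma comp_meas[measurable]: "(\<lambda>w. w i) \<in> borel_measurable (PiM I (\<lambda>_. Q))"
proof (cases "i \<in> I")
  case True
  then have "(\<lambda>w. w i) \<in> measurable (PiM I (\<lambda>_. Q)) Q" by (rule measurable_component_singleton)
  then show ?thesis using measurable_cong_sets[OF refl Q_sets] by blast
next
  case False
  have "(\<lambda>w. undefined::real) \<in> borel_measurable (PiM I (\<lambda>_. Q)) \<longleftrightarrow> (\<lambda>w. w i) \<in> borel_measurable (PiM I (\<lambda>_. Q))"
    using False by (intro measurable_cong) (auto simp: space_PiM PiE_def extensional_def)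
  then show ?thesis by simp
qed

lemma walk_meas[measurable]: "(\<lambda>w. walk w \<theta> m) \<in> borel_measurable (PiM I (\<lambda>_. Q))"
  unfolding walk_def by measurable

lemma Bd_meas[measurable]: "Measurable.pred (PiM I (\<lambda>_. Q)) (Bd \<theta> n)"
  unfolding Bd_def by measurable

lemma Up_meas[measurable]: "Measurable.pred (PiM I (\<lambda>_. Q)) (Up \<theta> n)"
  unfolding Up_def by measurable

lemma key:
  "(\<integral>\<^sup>+y. ennreal (min 1 (exp (-2*\<delta>*(r + (y - (mu - \<delta>)))))) \<partial>Q) \<le> ennreal (min 1 (exp (-2*\<delta>*r)))"
proof -
  interpret Q: prob_space Q by (rule Q_prob)
  have h1: "(\<integral>\<^sup>+y. ennreal (min 1 (exp (-2*\<delta>*(r + (y - (mu - \<delta>)))))) \<partial>Q) \<le> ennreal 1"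
  proof -
    have "(\<integral>\<^sup>+y. ennreal (min 1 (exp (-2*\<delta>*(r + (y - (mu - \<delta>)))))) \<partial>Q) \<le> (\<integral>\<^sup>+y. 1 \<partial>Q)"
      by (intro nn_integral_mono) auto
    also have "\<dots> = 1" using Q.emeasure_space_1 by simp
    finally show ?thesis by simp
  qed
  let ?s = "-2*\<delta>"
  have eq: "exp (-2*\<delta>*(r + (y - (mu - \<delta>)))) = exp (-2*\<delta>*r) * exp (-2*\<delta>^2) * exp (?s * (y - mu))" for y
    by (simp add: exp_add[symmetric] algebra_simps power2_eq_square)
  have h2: "(\<integral>\<^sup>+y. ennreal (min 1 (exp (-2*\<delta>*(r + (y - (mu - \<delta>)))))) \<partial>Q) \<le> ennreal (exp (-2*\<delta>*r))"
  proof -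
    have "(\<integral>\<^sup>+y. ennreal (min 1 (exp (-2*\<delta>*(r + (y - (mu - \<delta>)))))) \<partial>Q)
        \<le> (\<integral>\<^sup>+y. ennreal (exp (-2*\<delta>*r) * exp (-2*\<delta>^2)) * ennreal (exp (?s * (y - mu))) \<partial>Q)"
    proof (intro nn_integral_mono)
      fix y
      have "min 1 (exp (-2*\<delta>*(r + (y - (mu - \<delta>))))) \<le> exp (-2*\<delta>*r) * exp (-2*\<delta>^2) * exp (?s * (y - mu))"
        unfolding eq[of y] by (rule min.cobounded2)
      then show "ennreal (min 1 (exp (-2*\<delta>*(r + (y - (mu - \<delta>)))))) \<le> ennreal (exp (-2*\<delta>*r) * exp (-2*\<delta>^2)) * ennreal (exp (?s * (y - mu)))"
        by (subst ennreal_mult[symmetric]) (auto intro: ennreal_leI)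
    qed
    also have "\<dots> = ennreal (exp (-2*\<delta>*r) * exp (-2*\<delta>^2)) * (\<integral>\<^sup>+y. ennreal (exp (?s * (y - mu))) \<partial>Q)"
    proof (rule nn_integral_cmult)
      show "(\<lambda>y. ennreal (exp (?s * (y - mu)))) \<in> borel_measurable Q"
        by (intro meas_Q) measurable
    qed
    also have "(\<integral>\<^sup>+y. ennreal (exp (?s * (y - mu))) \<partial>Q) = ennreal (\<integral>y. exp (?s * (y - mu)) \<partial>Q)"
      by (rule nn_integral_eq_integral[OF Q_mgf(1)]) simp
    also have "ennreal (exp (-2*\<delta>*r) * exp (-2*\<delta>^2)) * ennreal (\<integral>y. exp (?s * (y - mu)) \<partial>Q)
        \<le> ennreal (exp (-2*\<delta>*r) * exp (-2*\<delta>^2)) * ennreal (exp (?s^2/2))"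
      by (intro mult_left_mono ennreal_leI Q_mgf(2)) simp
    also have "\<dots> = ennreal (exp (-2*\<delta>*r))"
      by (simp add: ennreal_mult[symmetric] exp_add[symmetric] power2_eq_square)
    finally show ?thesis .
  qed
  show ?thesis using h1 h2 by (simp add: min_def)
qed

end

context sgctx begin

definition Fa :: "nat \<Rightarrow> (nat \<Rightarrow> real) \<Rightarrow> real" where
  "Fa n w = (if Bd (mu-\<delta>) n w then 1 else if Up (mu-\<delta>) n w then min 1 (exp (-2*\<delta>*walk w (mu-\<delta>) n)) else 1)
     + (1 - exp (-2*\<delta>)) * (if Up (mu-\<delta>) n w then 1 else 0)"

lemma c_nonneg: "0 \<le> 1 - exp (-2*\<delta>)" using dpos by simp

lemma Fa_nonneg: "0 \<le> Fa n w"
  unfolding Fa_def using c_nonneg by auto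

lemma Fa_meas[measurable]: "Fa n \<in> borel_measurable (PiM I (\<lambda>_. Q))"
  unfolding Fa_def by measurable

lemma Fa_step: "(\<integral>\<^sup>+y. ennreal (Fa (Suc n) (w(n := y))) \<partial>Q) \<le> ennreal (Fa n w)"
proof -
  interpret Q: prob_space Q by (rule Q_prob)
  define t where "t = mu - \<delta>"
  define c where "c = 1 - exp (-2*\<delta>)"
  define r where "r = walk w t n"
  have c0: "0 \<le> c" using c_nonneg c_def by simp
  have wS: "walk (w(n := y)) t (Suc n) = r + (y - t)" for y
    using walk_upd_Suc r_def by simp
  have bd: "Bd t (Suc n) (w(n := y)) \<longleftrightarrow> Bd t n w \<or> r + (y - t) < 0" for y
    using Bd_Suc[of t n "w(n := y)"] Bd_cong[of n "w(n := y)" w t] wS by simp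
  have up: "Up t (Suc n) (w(n := y)) \<longleftrightarrow> Up t n w \<or> (1 \<le> r + (y - t) \<and>
       (\<forall>m. 1 \<le> m \<and> m \<le> n \<longrightarrow> 0 \<le> walk w t m \<and> walk w t m < 1))" for y
  proof -
    have "\<And>m. m \<le> n \<Longrightarrow> walk (w(n := y)) t m = walk w t m" by (rule walk_upd_le)
    then have "(\<forall>m. 1 \<le> m \<and> m \<le> n \<longrightarrow> 0 \<le> walk (w(n := y)) t m \<and> walk (w(n := y)) t m < 1) \<longleftrightarrow>
       (\<forall>m. 1 \<le> m \<and> m \<le> n \<longrightarrow> 0 \<le> walk w t m \<and> walk w t m < 1)" by auto
    then show ?thesis
      using Up_Suc[of t n "w(n := y)"] Up_cong[of n "w(n := y)" w t] wS by simp
  qed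
  have FaS: "Fa (Suc n) (w(n := y)) =
     (if Bd t (Suc n) (w(n := y)) then 1 else if Up t (Suc n) (w(n := y)) then min 1 (exp (-2*\<delta>*(r + (y - t)))) else 1)
     + c * (if Up t (Suc n) (w(n := y)) then 1 else 0)" for y
    unfolding Fa_def t_def[symmetric] c_def[symmetric] wS ..
  have Fan: "Fa n w = (if Bd t n w then 1 else if Up t n w then min 1 (exp (-2*\<delta>*r)) else 1)
     + c * (if Up t n w then 1 else 0)"
    unfolding Fa_def t_def[symmetric] c_def[symmetric] r_def ..
  show ?thesis
  proof (cases "Bd t n w")
    case True
    then obtain m where m: "1 \<le> m" "m \<le> n" "walk w t m < 0" unfolding Bd_def by auto
    have "Fa (Suc n) (w(n := y)) = Fa n w" for y
      unfolding FaS Fan using True m bd[of y] up[of y] by force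
    then show ?thesis by (simp add: Q.emeasure_space_1)
  next
    case nB: False
    show ?thesis
    proof (cases "Up t n w")
      case True
      have "Fa (Suc n) (w(n := y)) = min 1 (exp (-2*\<delta>*(r + (y - t)))) + c" for y
      proof -
        have "r + (y - t) < 0 \<Longrightarrow> min 1 (exp (-2*\<delta>*(r + (y - t)))) = 1"
          using dpos by (simp add: mult_pos_neg)
        then show ?thesis unfolding FaS using True nB bd[of y] up[of y] by auto
      qed
      then have "(\<integral>\<^sup>+y. ennreal (Fa (Suc n) (w(n := y))) \<partial>Q)
          = (\<integral>\<^sup>+y. ennreal (min 1 (exp (-2*\<delta>*(r + (y - t))))) + ennreal c \<partial>Q)"
        using c0 by (simp add: ennreal_plus)
      also have "\<dots> = (\<integral>\<^sup>+y. ennreal (min 1 (exp (-2*\<delta>*(r + (y - t))))) \<partial>Q) + (\<integral>\<^sup>+y. ennreal c \<partial>Q)"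
        by (rule nn_integral_add) (auto intro!: meas_Q)
      also have "\<dots> \<le> ennreal (min 1 (exp (-2*\<delta>*r))) + ennreal c"
        using key[of r] unfolding t_def by (simp add: Q.emeasure_space_1 add_right_mono)
      also have "\<dots> = ennreal (Fa n w)"
        unfolding Fan using True nB c0 by (simp add: ennreal_plus)
      finally show ?thesis .
    next
      case nU: False
      have ins: "\<forall>m. 1 \<le> m \<and> m \<le> n \<longrightarrow> 0 \<le> walk w t m \<and> walk w t m < 1"
        using inside[OF nB nU] by blast
      have le1: "Fa (Suc n) (w(n := y)) \<le> 1" for y
      proof -
        consider "r + (y - t) < 0" | "1 \<le> r + (y - t)" | "0 \<le> r + (y - t)" "r + (y - t) < 1" by linarith
        then show ?thesis
        proof cases
          case 1 then show ?thesis unfolding FaS using nB nU bd[of y] up[of y] by auto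
        next
          case 2
          have "exp (-2*\<delta>*(r + (y - t))) \<le> exp (-2*\<delta>)" using 2 dpos by simp
          then have "min 1 (exp (-2*\<delta>*(r + (y - t)))) + c \<le> 1" unfolding c_def by linarith
          then show ?thesis unfolding FaS using nB nU ins 2 bd[of y] up[of y] by auto
        next
          case 3 then show ?thesis unfolding FaS using nB nU bd[of y] up[of y] by auto
        qed
      qed
      have "(\<integral>\<^sup>+y. ennreal (Fa (Suc n) (w(n := y))) \<partial>Q) \<le> (\<integral>\<^sup>+y. 1 \<partial>Q)"
        using le1 by (intro nn_integral_mono) simp
      also have "\<dots> = 1" by (simp add: Q.emeasure_space_1)
      also have "\<dots> = ennreal (Fa n w)" unfolding Fan using nB nU by simp
      finally show ?thesis .
    qed
  qed
qed

lemma Fa_int: "(\<integral>\<^sup>+w. ennreal (Fa N w) \<partial>PiM {..<N} (\<lambda>_. Q)) \<le> 1"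
proof (induction N)
  case 0
  interpret P0: prob_space "PiM {} (\<lambda>_::nat. Q)" by (intro prob_space_PiM Q_prob)
  have "Fa 0 w = 1" for w by (simp add: Fa_def)
  then show ?case by (simp add: P0.emeasure_space_1)
next
  case (Suc n)
  interpret Q: prob_space Q by (rule Q_prob)
  interpret PQ: product_prob_space "\<lambda>_::nat. Q" UNIV ..
  have "(\<integral>\<^sup>+w. ennreal (Fa (Suc n) w) \<partial>PiM {..<Suc n} (\<lambda>_. Q))
      = (\<integral>\<^sup>+w. ennreal (Fa (Suc n) w) \<partial>PiM (insert n {..<n}) (\<lambda>_. Q))"
    by (simp add: lessThan_Suc)
  also have "\<dots> = (\<integral>\<^sup>+w. (\<integral>\<^sup>+y. ennreal (Fa (Suc n) (w(n := y))) \<partial>Q) \<partial>PiM {..<n} (\<lambda>_. Q))"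
    by (rule PQ.product_nn_integral_insert) auto
  also have "\<dots> \<le> (\<integral>\<^sup>+w. ennreal (Fa n w) \<partial>PiM {..<n} (\<lambda>_. Q))"
    by (intro nn_integral_mono Fa_step)
  also have "\<dots> \<le> 1" by (rule Suc.IH)
  finally show ?case .
qed

lemma caseA_fin:
  "measure (PiM {..<N} (\<lambda>_. Q)) {w \<in> space (PiM {..<N} (\<lambda>_. Q)). Bd (mu-\<delta>) N w}
   + (1 - exp (-2*\<delta>)) * measure (PiM {..<N} (\<lambda>_. Q)) {w \<in> space (PiM {..<N} (\<lambda>_. Q)). Up (mu-\<delta>) N w} \<le> 1"
proof -
  let ?P = "PiM {..<N} (\<lambda>_. Q)"
  interpret P: prob_space ?P by (intro prob_space_PiM Q_prob)
  define A where "A = {w \<in> space ?P. Bd (mu-\<delta>) N w}"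
  define B where "B = {w \<in> space ?P. Up (mu-\<delta>) N w}"
  define c where "c = 1 - exp (-2*\<delta>)"
  have c0: "0 \<le> c" using c_nonneg c_def by simp
  have [measurable]: "A \<in> sets ?P" "B \<in> sets ?P" unfolding A_def B_def by measurable
  have "(\<integral>\<^sup>+w. indicator A w + ennreal c * indicator B w \<partial>?P) = (\<integral>\<^sup>+w. ennreal (indicator A w + c * indicator B w) \<partial>?P)"
    using c0 by (intro nn_integral_cong) (auto simp: indicator_def)
  also have "\<dots> \<le> (\<integral>\<^sup>+w. ennreal (Fa N w) \<partial>?P)"
  proof (intro nn_integral_mono ennreal_leI)
    fix w assume "w \<in> space ?P"
    show "indicator A w + c * indicator B w \<le> Fa N w"
      unfolding Fa_def c_def[symmetric] A_def B_def using \<open>w \<in> space ?P\<close> by (auto simp: indicator_def)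
  qed
  also have "\<dots> \<le> 1" by (rule Fa_int)
  finally have "(\<integral>\<^sup>+w. indicator A w + ennreal c * indicator B w \<partial>?P) \<le> 1" .
  moreover have "(\<integral>\<^sup>+w. indicator A w + ennreal c * indicator B w \<partial>?P) = emeasure ?P A + ennreal c * emeasure ?P B"
    by (subst nn_integral_add) (auto simp: nn_integral_cmult)
  ultimately have "emeasure ?P A + ennreal c * emeasure ?P B \<le> 1" by simp
  then have "ennreal (measure ?P A + c * measure ?P B) \<le> 1"
    using c0 by (simp add: P.emeasure_eq_measure ennreal_mult ennreal_plus)
  then show ?thesis unfolding A_def B_def c_def by simp
qed

definition Fb :: "nat \<Rightarrow> (nat \<Rightarrow> real) \<Rightarrow> real" where
  "Fb n w = (if Bd (mu-\<delta>) n w then 1 else if n = 0 then 1 else min 1 (exp (-2*\<delta>*walk w (mu-\<delta>) n)))"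

lemma Fb_meas[measurable]: "Fb n \<in> borel_measurable (PiM I (\<lambda>_. Q))"
  unfolding Fb_def by measurable

lemma Fb_step:
  assumes "1 \<le> n"
  shows "(\<integral>\<^sup>+y. ennreal (Fb (Suc n) (w(n := y))) \<partial>Q) \<le> ennreal (Fb n w)"
proof -
  interpret Q: prob_space Q by (rule Q_prob)
  define t where "t = mu - \<delta>"
  define r where "r = walk w t n"
  have wS: "walk (w(n := y)) t (Suc n) = r + (y - t)" for y
    using walk_upd_Suc r_def by simp
  have bd: "Bd t (Suc n) (w(n := y)) \<longleftrightarrow> Bd t n w \<or> r + (y - t) < 0" for y
    using Bd_Suc[of t n "w(n := y)"] Bd_cong[of n "w(n := y)" w t] wS by simp
  have FbS: "Fb (Suc n) (w(n := y)) =
     (if Bd t (Suc n) (w(n := y)) then 1 else min 1 (exp (-2*\<delta>*(r + (y - t)))))" for y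
    unfolding Fb_def t_def[symmetric] wS by simp
  have Fbn: "Fb n w = (if Bd t n w then 1 else min 1 (exp (-2*\<delta>*r)))"
    unfolding Fb_def t_def[symmetric] r_def using assms by simp
  show ?thesis
  proof (cases "Bd t n w")
    case True
    then show ?thesis unfolding FbS Fbn using bd by (simp add: Q.emeasure_space_1)
  next
    case nB: False
    have "Fb (Suc n) (w(n := y)) = min 1 (exp (-2*\<delta>*(r + (y - t))))" for y
    proof -
      have "r + (y - t) < 0 \<Longrightarrow> min 1 (exp (-2*\<delta>*(r + (y - t)))) = 1"
        using dpos by (simp add: mult_pos_neg)
      then show ?thesis unfolding FbS using nB bd[of y] by auto
    qed
    then have "(\<integral>\<^sup>+y. ennreal (Fb (Suc n) (w(n := y))) \<partial>Q)
          = (\<integral>\<^sup>+y. ennreal (min 1 (exp (-2*\<delta>*(r + (y - t))))) \<partial>Q)" by simp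
    also have "\<dots> \<le> ennreal (min 1 (exp (-2*\<delta>*r)))"
      using key[of r] unfolding t_def by simp
    also have "\<dots> = ennreal (Fb n w)" unfolding Fbn using nB by simp
    finally show ?thesis .
  qed
qed

definition gfun :: "real \<Rightarrow> real" where
  "gfun y = (1 - exp (-2*\<delta>*(y - (mu-\<delta>)))) * indicator {mu-\<delta>..} y"

lemma gfun_meas[measurable]: "gfun \<in> borel_measurable borel"
  unfolding gfun_def by measurable

lemma gfun_bounds: "0 \<le> gfun y" "gfun y \<le> 1"
  unfolding gfun_def using dpos by (auto simp: indicator_def mult_nonneg_nonneg)

lemma gfun_int: "integrable Q gfun"
proof -
  interpret Q: prob_space Q by (rule Q_prob)
  show ?thesis
    by (rule Q.integrable_const_bound[where B=1]) (auto intro!: meas_Q simp: gfun_bounds)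
qed

lemma Fb1: "(\<integral>\<^sup>+w. ennreal (Fb 1 w) \<partial>PiM {..<1} (\<lambda>_. Q)) = ennreal (1 - (\<integral>y. gfun y \<partial>Q))"
proof -
  interpret Q: prob_space Q by (rule Q_prob)
  interpret PQ: product_prob_space "\<lambda>_::nat. Q" UNIV ..
  interpret P0: prob_space "PiM {} (\<lambda>_::nat. Q)" by (intro prob_space_PiM Q_prob)
  define t where "t = mu - \<delta>"
  have pt: "Fb 1 (w(0 := y)) = 1 - gfun y" for w y
  proof -
    have "walk (w(0 := y)) t 1 = y - t" using walk_upd_Suc[of w 0 y t] by (simp add: walk_def)
    moreover have "Bd t 1 (w(0 := y)) \<longleftrightarrow> y - t < 0"
      using Bd_Suc[of t 0 "w(0 := y)"] \<open>walk (w(0 := y)) t 1 = y - t\<close> by simp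
    ultimately show ?thesis
      unfolding Fb_def gfun_def t_def[symmetric] using dpos
      by (auto simp: indicator_def mult_nonneg_nonneg)
  qed
  have "(\<integral>\<^sup>+w. ennreal (Fb 1 w) \<partial>PiM {..<1} (\<lambda>_. Q))
      = (\<integral>\<^sup>+w. ennreal (Fb 1 w) \<partial>PiM (insert 0 {}) (\<lambda>_. Q))"
    by (simp add: lessThan_Suc)
  also have "\<dots> = (\<integral>\<^sup>+w. (\<integral>\<^sup>+y. ennreal (Fb 1 (w(0 := y))) \<partial>Q) \<partial>PiM ({}::nat set) (\<lambda>_. Q))"
    by (rule PQ.product_nn_integral_insert) auto
  also have "\<dots> = (\<integral>\<^sup>+w. (\<integral>\<^sup>+y. ennreal (1 - gfun y) \<partial>Q) \<partial>PiM ({}::nat set) (\<lambda>_. Q))"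
    by (simp only: pt)
  also have "\<dots> = (\<integral>\<^sup>+y. ennreal (1 - gfun y) \<partial>Q)"
    by (simp add: P0.emeasure_space_1)
  also have "\<dots> = ennreal (\<integral>y. (1 - gfun y) \<partial>Q)"
    by (rule nn_integral_eq_integral) (auto intro!: Bochner_Integration.integrable_diff gfun_int simp: gfun_bounds)
  also have "(\<integral>y. (1 - gfun y) \<partial>Q) = 1 - (\<integral>y. gfun y \<partial>Q)"
    using gfun_int by (simp add: Bochner_Integration.integral_diff Q.prob_space)
  finally show ?thesis .
qed

lemma Fb_int: "1 \<le> N \<Longrightarrow> (\<integral>\<^sup>+w. ennreal (Fb N w) \<partial>PiM {..<N} (\<lambda>_. Q)) \<le> ennreal (1 - (\<integral>y. gfun y \<partial>Q))"
proof (induction N rule: dec_induct)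
  case base
  show ?case by (rule order_eq_refl[OF Fb1])
next
  case (step n)
  interpret Q: prob_space Q by (rule Q_prob)
  interpret PQ: product_prob_space "\<lambda>_::nat. Q" UNIV ..
  have "(\<integral>\<^sup>+w. ennreal (Fb (Suc n) w) \<partial>PiM {..<Suc n} (\<lambda>_. Q))
      = (\<integral>\<^sup>+w. ennreal (Fb (Suc n) w) \<partial>PiM (insert n {..<n}) (\<lambda>_. Q))"
    by (simp add: lessThan_Suc)
  also have "\<dots> = (\<integral>\<^sup>+w. (\<integral>\<^sup>+y. ennreal (Fb (Suc n) (w(n := y))) \<partial>Q) \<partial>PiM {..<n} (\<lambda>_. Q))"
    by (rule PQ.product_nn_integral_insert) auto
  also have "\<dots> \<le> (\<integral>\<^sup>+w. ennreal (Fb n w) \<partial>PiM {..<n} (\<lambda>_. Q))"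
    by (intro nn_integral_mono Fb_step step.hyps)
  also have "\<dots> \<le> ennreal (1 - (\<integral>y. gfun y \<partial>Q))" by (rule step.IH)
  finally show ?case .
qed

lemma caseB_fin:
  "measure (PiM {..<N} (\<lambda>_. Q)) {w \<in> space (PiM {..<N} (\<lambda>_. Q)). Bd (mu-\<delta>) N w} \<le> 1 - (\<integral>y. gfun y \<partial>Q)"
proof -
  let ?P = "PiM {..<N} (\<lambda>_. Q)"
  interpret Q: prob_space Q by (rule Q_prob)
  interpret P: prob_space ?P by (intro prob_space_PiM Q_prob)
  define A where "A = {w \<in> space ?P. Bd (mu-\<delta>) N w}"
  have [measurable]: "A \<in> sets ?P" unfolding A_def by measurable
  have gle: "(\<integral>y. gfun y \<partial>Q) \<le> 1"
    using Q.integral_le_const[of gfun 1] gfun_int gfun_bounds by auto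
  have "measure ?P A \<le> 1 - (\<integral>y. gfun y \<partial>Q)"
  proof (cases "N = 0")
    case True
    then have "A = {}" unfolding A_def by simp
    then show ?thesis using gle by simp
  next
    case False
    have "emeasure ?P A = (\<integral>\<^sup>+w. indicator A w \<partial>?P)" by simp
    also have "\<dots> \<le> (\<integral>\<^sup>+w. ennreal (Fb N w) \<partial>?P)"
      by (intro nn_integral_mono) (auto simp: indicator_def A_def Fb_def)
    also have "\<dots> \<le> ennreal (1 - (\<integral>y. gfun y \<partial>Q))" using False by (intro Fb_int) simp
    finally show ?thesis using gle by (simp add: P.emeasure_eq_measure)
  qed
  then show ?thesis unfolding A_def .
qed

lemma sq1: "0 \<le> (x::real) \<Longrightarrow> x \<le> 3/2 \<Longrightarrow> x^2/2 \<le> x*(3/4)"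
  using mult_left_mono[of x "3/2" x] by (simp add: power2_eq_square)

lemma gfun_pointwise:
  assumes ds: "\<delta> \<le> 0.05"
  shows "(\<delta>/2) * ((y - (mu-\<delta>)) * indicator {mu-\<delta>..} y - exp (1 * (y - mu)) * exp (\<delta> - 3/(4*\<delta>) - 1)) \<le> gfun y"
proof -
  define t where "t = mu - \<delta>"
  define K where "K = 3/(4*\<delta>)"
  have eK: "exp (1 * (y - mu)) * exp (\<delta> - 3/(4*\<delta>) - 1) = exp (y - t - K - 1)"
    by (simp add: exp_add[symmetric] t_def K_def)
  have g0: "0 \<le> exp (y - t - K - 1)" by simp
  show ?thesis
  proof (cases "y < t")
    case True
    then have "gfun y = 0" unfolding gfun_def t_def by (simp add: indicator_def)
    then show ?thesis using True dpos g0 unfolding eK t_def[symmetric]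
      by (simp add: indicator_def mult_nonneg_nonneg)
  next
    case False
    define Y where "Y = y - t"
    have Y0: "0 \<le> Y" using False Y_def by simp
    have gY: "gfun y = 1 - exp (-(2*\<delta>*Y))" unfolding gfun_def Y_def t_def using False t_def
      by (simp add: indicator_def)
    have Kpos: "0 < K" using dpos K_def by simp
    have dK: "2*\<delta>*K = 3/2" unfolding K_def using dpos by (simp add: field_simps)
    show ?thesis
    proof (cases "Y \<le> K")
      case True
      have x0: "0 \<le> 2*\<delta>*Y" using dpos Y0 by simp
      have "2*\<delta>*Y \<le> 2*\<delta>*K" using True dpos by (intro mult_left_mono) auto
      then have x1: "2*\<delta>*Y \<le> 3/2" using dK by simp
      have "(2*\<delta>*Y) - (2*\<delta>*Y)^2/2 \<le> gfun y" using one_minus_exp_ge[OF x0] gY by simp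
      moreover have "\<delta>*Y/2 \<le> (2*\<delta>*Y) - (2*\<delta>*Y)^2/2"
      proof -
        have "(2*\<delta>*Y)^2/2 \<le> (2*\<delta>*Y) * (3/4)" using x0 x1 by (rule sq1)
        then show ?thesis by simp
      qed
      moreover have "(\<delta>/2) * (Y * indicator {mu-\<delta>..} y - exp (y - t - K - 1)) \<le> \<delta>*Y/2"
        using dpos g0 False by (simp add: indicator_def t_def right_diff_distrib)
      ultimately show ?thesis unfolding eK Y_def t_def by linarith
    next
      case False
      have "exp (-(2*\<delta>*Y)) \<le> exp (-(2*\<delta>*K))" using False dpos by simp
      also have "\<dots> = exp (-(3/2))" using dK by simp
      also have "\<dots> \<le> 1 - (3/2 - (3/2)^2/2)" using exp_neg_le_taylor[of "3/2"] by simp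
      finally have e58: "exp (-(2*\<delta>*Y)) \<le> 1 - (3/2 - (3/2)^2/2)" .
      have "3/8 \<le> gfun y" using e58 gY by (simp add: power2_eq_square)
      moreover have "Y - exp (Y - K - 1) \<le> K" using exp_ge_add_one_self[of "Y - K - 1"] by simp
      moreover have "(\<delta>/2) * K = 3/8" using dK by (simp add: mult.commute)
      moreover have "(\<delta>/2) * (Y - exp (Y - K - 1)) \<le> (\<delta>/2) * K"
        using dpos \<open>Y - exp (Y - K - 1) \<le> K\<close> by (intro mult_left_mono) auto
      ultimately have "(\<delta>/2) * (Y - exp (Y - K - 1)) \<le> gfun y" by linarith
      moreover have "y \<in> {mu-\<delta>..}" using \<open>\<not> y < t\<close> t_def by simp
      ultimately show ?thesis unfolding eK Y_def t_def by simp
    qed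
  qed
qed

lemma eta_small:
  assumes ds: "\<delta> \<le> 0.05"
  shows "exp (\<delta> - 3/(4*\<delta>) - 1) * exp (1^2/2) \<le> \<delta>/2"
proof -
  define x where "x = 3/(4*\<delta>)"
  have x0: "0 \<le> x" using dpos x_def by simp
  have xpos: "0 < x" using dpos x_def by simp
  have "x^2/2 \<le> exp x" using exp_lower_Taylor_quadratic[OF x0] x0 by simp
  have "exp (\<delta> - 3/(4*\<delta>) - 1) * exp (1^2/2) = exp ((\<delta> - 1/2) - 3/(4*\<delta>))"
    by (simp add: exp_add[symmetric])
  also have "\<dots> = exp (\<delta> - 1/2) / exp x" unfolding x_def by (rule exp_diff)
  also have "\<dots> \<le> 1 / exp x" using ds by (intro divide_right_mono) auto
  also have "\<dots> \<le> 1 / (x^2/2)"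
    by (rule divide_left_mono[OF \<open>x^2/2 \<le> exp x\<close>]) (use xpos in auto)
  also have "\<dots> = 32 * \<delta>^2 / 9" unfolding x_def using dpos by (simp add: field_simps power2_eq_square)
  also have "\<dots> \<le> \<delta>/2" using dpos ds by (simp add: power2_eq_square field_simps)
  finally show ?thesis .
qed

lemma caseB_analytic:
  assumes ds: "\<delta> \<le> 0.05"
    and hp: "p0 \<le> (\<integral>x. (x - (mu-\<delta>)) * indicator {mu-\<delta>..} x \<partial>Q)"
  shows "p0 * \<delta> / 4 \<le> (\<integral>y. gfun y \<partial>Q)"
proof -
  interpret Q: prob_space Q by (rule Q_prob)
  define t where "t = mu - \<delta>"
  define h where "h = (\<lambda>x. (x - t) * indicator {t..} x)"
  define E where "E = exp (\<delta> - 3/(4*\<delta>) - 1)"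
  have iid: "integrable Q (\<lambda>x. x)" and mean: "(\<integral>x. x \<partial>Q) = mu"
    using sg by (auto simp: subgaussian_mean_def)
  have ih: "integrable Q h" unfolding h_def
    by (intro integrable_real_mult_indicator Bochner_Integration.integrable_diff iid)
       (auto simp: Q_sets)
  have ie: "integrable Q (\<lambda>y. exp (1 * (y - mu)))" by (rule Q_mgf(1))
  have A_p0: "p0 \<le> integral\<^sup>L Q h" using hp unfolding h_def t_def .
  have A_d: "\<delta> \<le> integral\<^sup>L Q h"
  proof -
    have "(\<integral>x. (x - t) \<partial>Q) \<le> integral\<^sup>L Q h"
      by (intro integral_mono ih Bochner_Integration.integrable_diff iid) (auto simp: h_def indicator_def)
    moreover have "(\<integral>x. (x - t) \<partial>Q) = \<delta>"
      using iid mean by (simp add: Bochner_Integration.integral_diff Q.prob_space t_def)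
    ultimately show ?thesis by simp
  qed
  have F1: "(\<integral>y. (\<delta>/2) * (h y - exp (1 * (y - mu)) * E) \<partial>Q) \<le> (\<integral>y. gfun y \<partial>Q)"
    by (intro integral_mono gfun_int integrable_mult_right Bochner_Integration.integrable_diff ih
        integrable_mult_left ie)
       (use gfun_pointwise[OF ds] in \<open>simp add: h_def t_def E_def\<close>)
  have F2: "(\<integral>y. (\<delta>/2) * (h y - exp (1 * (y - mu)) * E) \<partial>Q)
      = (\<delta>/2) * (integral\<^sup>L Q h - (\<integral>y. exp (1 * (y - mu)) \<partial>Q) * E)"
    using ih ie by (simp add: Bochner_Integration.integral_diff)
  have "(\<integral>y. exp (1 * (y - mu)) \<partial>Q) * E \<le> \<delta>/2"
  proof -
    have "(\<integral>y. exp (1 * (y - mu)) \<partial>Q) * E \<le> exp (1^2/2) * E"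
      using Q_mgf(2)[of 1] unfolding E_def by (intro mult_right_mono) auto
    also have "\<dots> \<le> \<delta>/2" using eta_small[OF ds] unfolding E_def by (simp add: mult.commute)
    finally show ?thesis .
  qed
  have main: "(\<delta>/2) * (integral\<^sup>L Q h - (\<integral>y. exp (1 * (y - mu)) \<partial>Q) * E) \<le> (\<integral>y. gfun y \<partial>Q)"
    using F1 F2 by linarith
  define \<eta> where "\<eta> = (\<integral>y. exp (1 * (y - mu)) \<partial>Q) * E"
  have eta: "\<eta> \<le> \<delta>/2" using \<open>(\<integral>y. exp (1 * (y - mu)) \<partial>Q) * E \<le> \<delta>/2\<close> \<eta>_def by simp
  have "p0 / 2 \<le> integral\<^sup>L Q h - \<eta>" using A_p0 A_d eta by linarith
  then have "(\<delta>/2) * (p0/2) \<le> (\<delta>/2) * (integral\<^sup>L Q h - \<eta>)" using dpos by (intro mult_left_mono) auto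
  moreover have main': "(\<delta>/2) * (integral\<^sup>L Q h - \<eta>) \<le> (\<integral>y. gfun y \<partial>Q)"
    using main unfolding \<eta>_def .
  moreover have "p0 * \<delta> / 4 = (\<delta>/2) * (p0/2)" by simp
  ultimately show ?thesis by linarith
qed

end

lemma exits_up_iff: "exits_up \<theta> w \<longleftrightarrow> (\<exists>N. Up \<theta> N w)"
  unfolding exits_up_def Up_def by auto

theorem lemma3:
  fixes Q :: "real measure" and mu p0 \<delta> :: real
    and M :: "'a measure" and X :: "nat \<Rightarrow> 'a \<Rightarrow> real"
  assumes "upward_looking Q mu p0"
    and "0 \<le> p0"
    and "prob_space M"
    and "\<And>i. X i \<in> borel_measurable M"
    and "prob_space.indep_vars M (\<lambda>_. borel) X UNIV"
    and "\<And>i. distr M borel (X i) = Q"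
    and "\<delta> \<le> 0.05"
  shows "measure M {\<omega> \<in> space M. \<exists>n\<ge>1. (\<Sum>i<n. X i \<omega>) / real n < mu - \<delta>}
           \<le> exp (- p0 * \<delta> / 4)"
proof -
  interpret M: prob_space M by (rule assms(3))
  note Xm[measurable] = assms(4)
  show ?thesis
  proof (cases "\<delta> \<le> 0")
    case True
    have "0 \<le> - p0 * \<delta> / 4" using True assms(2) by (simp add: mult_nonneg_nonpos)
    then have "1 \<le> exp (- p0 * \<delta> / 4)" by simp
    then show ?thesis using M.prob_le_1 order_trans by blast
  next
    case False
    then have dpos: "0 < \<delta>" by simp
    have sgm: "subgaussian_mean Q mu" using assms(1) by (simp add: upward_looking_def)
    interpret S: sgctx Q mu \<delta> by unfold_locales (use sgm dpos in auto)
    interpret Q: prob_space Q by (rule S.Q_prob)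
    interpret PQ: product_prob_space "\<lambda>_::nat. Q" UNIV ..
    define t where "t = mu - \<delta>"
    define A where "A N = {x \<in> space M. Bd t N (\<lambda>i. X i x)}" for N
    define P where "P N = PiM {..<N} (\<lambda>_::nat. Q)" for N
    have Am: "A N \<in> M.events" for N unfolding A_def Bd_def walk_def by measurable
    have transfer: "measure M (A N) = measure (P N) {w \<in> space (P N). Bd t N w}" for N
    proof (cases "N = 0")
      case True
      then show ?thesis by (simp add: A_def)
    next
      case False
      let ?\<Phi> = "\<lambda>x. \<lambda>i\<in>{..<N}. X i x"
      let ?PB = "PiM {..<N} (\<lambda>_::nat. borel :: real measure)"
      have ind: "M.indep_vars (\<lambda>_. borel) X {..<N}"
        by (rule M.indep_vars_subset[OF assms(5)]) auto
      have "distr M ?PB ?\<Phi> = PiM {..<N} (\<lambda>i. distr M borel (X i))"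
        using M.indep_vars_iff_distr_eq_PiM[of "{..<N}" X "\<lambda>_. borel"] ind False by auto
      also have "\<dots> = P N" by (simp add: assms(6) P_def)
      finally have D: "distr M ?PB ?\<Phi> = P N" .
      have \<Phi>m: "?\<Phi> \<in> measurable M ?PB" by (intro measurable_restrict) auto
      define Sx where "Sx = {w \<in> space (P N). Bd t N w}"
      have "Sx \<in> sets (P N)" unfolding Sx_def P_def by measurable
      moreover have "sets (P N) = sets ?PB" unfolding P_def by (intro sets_PiM_cong) (auto simp: S.Q_sets)
      ultimately have SxB: "Sx \<in> sets ?PB" by simp
      have "measure (P N) Sx = measure M (?\<Phi> -` Sx \<inter> space M)"
        unfolding D[symmetric] by (rule measure_distr[OF \<Phi>m SxB])
      also have "?\<Phi> -` Sx \<inter> space M = A N"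
      proof -
        have "?\<Phi> x \<in> space (P N)" for x by (simp add: P_def space_PiM S.Q_space)
        moreover have "Bd t N (?\<Phi> x) = Bd t N (\<lambda>i. X i x)" for x by (rule Bd_cong) simp
        ultimately show ?thesis unfolding Sx_def A_def by auto
      qed
      finally show ?thesis unfolding Sx_def by simp
    qed
    have target: "{\<omega> \<in> space M. \<exists>n\<ge>1. (\<Sum>i<n. X i \<omega>) / real n < mu - \<delta>} = (\<Union>N. A N)"
    proof -
      have "(\<Sum>i<n. X i x) / real n < mu - \<delta> \<longleftrightarrow> walk (\<lambda>i. X i x) t n < 0" if "1 \<le> n" for n x
        using that by (simp add: walk_def t_def pos_divide_less_eq mult.commute)
      then show ?thesis unfolding A_def Bd_def by auto
    qed
    have incA: "incseq A" unfolding A_def by (intro incseq_SucI) (auto simp: Bd_Suc)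
    have limA: "(\<lambda>N. measure M (A N)) \<longlonglongrightarrow> measure M (\<Union>N. A N)"
      by (rule M.finite_Lim_measure_incseq) (use Am incA in auto)
    have "upward_looking Q mu p0" by fact
    then have alt: "measure (iid_space Q) {\<omega> \<in> space (iid_space Q). exits_up t \<omega>} \<ge> p0
        \<or> (\<integral>x. (x - t) * indicator {t..} x \<partial>Q) \<ge> p0"
      unfolding upward_looking_def t_def using dpos by auto
    have fin: "1 - p0 * \<delta> / 4 \<le> exp (- p0 * \<delta> / 4)"
      using exp_ge_add_one_self[of "- p0 * \<delta> / 4"] by simp
    show ?thesis
      using alt
    proof
      assume hb: "(\<integral>x. (x - t) * indicator {t..} x \<partial>Q) \<ge> p0"
      have "p0 * \<delta> / 4 \<le> (\<integral>y. S.gfun y \<partial>Q)"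
        by (rule S.caseB_analytic[OF assms(7)]) (use hb in \<open>simp add: t_def\<close>)
      then have "measure M (A N) \<le> exp (- p0 * \<delta> / 4)" for N
        using S.caseB_fin[of N] transfer[of N] fin unfolding P_def t_def by linarith
      then have "measure M (\<Union>N. A N) \<le> exp (- p0 * \<delta> / 4)"
        by (intro LIMSEQ_le_const2[OF limA]) auto
      then show ?thesis unfolding target .
    next
      assume ha: "measure (iid_space Q) {\<omega> \<in> space (iid_space Q). exits_up t \<omega>} \<ge> p0"
      let ?I = "iid_space Q"
      have I_eq: "?I = PiM UNIV (\<lambda>_. Q)" by (simp add: iid_space_def)
      define U where "U N = {w \<in> space ?I. Up t N w}" for N
      have Um: "U N \<in> sets ?I" for N unfolding U_def I_eq by measurable
      have incU: "incseq U" unfolding U_def by (intro incseq_SucI) (auto simp: Up_Suc)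
      have limU: "(\<lambda>N. measure ?I (U N)) \<longlonglongrightarrow> measure ?I (\<Union>N. U N)"
        unfolding I_eq by (rule PQ.finite_Lim_measure_incseq) (use Um incU I_eq in auto)
      have UU: "(\<Union>N. U N) = {\<omega> \<in> space ?I. exits_up t \<omega>}"
        unfolding U_def exits_up_iff by auto
      have Ueq: "measure ?I (U N) = measure (P N) {w \<in> space (P N). Up t N w}" for N
      proof -
        define Sx where "Sx = {w \<in> space (P N). Up t N w}"
        have SxP: "Sx \<in> sets (PiM {..<N} (\<lambda>_. Q))" unfolding Sx_def P_def by measurable
        have "U N = prod_emb UNIV (\<lambda>_. Q) {..<N} Sx"
        proof -
          have "Up t N (restrict w {..<N}) = Up t N w" for w by (rule Up_cong) simp
          moreover have "restrict w {..<N} \<in> space (P N)" for w by (simp add: P_def space_PiM S.Q_space)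
          ultimately show ?thesis
            unfolding U_def Sx_def prod_emb_def I_eq by (auto simp: space_PiM)
        qed
        then have "emeasure ?I (U N) = emeasure (P N) Sx"
          unfolding I_eq P_def using PQ.emeasure_PiM_emb'[of "{..<N}" Sx] SxP by simp
        then show ?thesis unfolding Sx_def measure_def by simp
      qed
      define c where "c = 1 - exp (-2*\<delta>)"
      have le: "measure M (A N) \<le> 1 - c * measure ?I (U N)" for N
      proof -
        have tr: "measure (PiM {..<N} (\<lambda>_. Q)) {w \<in> space (PiM {..<N} (\<lambda>_. Q)). Bd (mu-\<delta>) N w} = measure M (A N)"
          using transfer[of N] unfolding P_def t_def by simp
        have ue: "measure (PiM {..<N} (\<lambda>_. Q)) {w \<in> space (PiM {..<N} (\<lambda>_. Q)). Up (mu-\<delta>) N w} = measure ?I (U N)"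
          using Ueq[of N] unfolding P_def t_def by simp
        show ?thesis using S.caseA_fin[of N] unfolding tr ue c_def[symmetric] by linarith
      qed
      have "(\<lambda>N. 1 - c * measure ?I (U N)) \<longlonglongrightarrow> 1 - c * measure ?I (\<Union>N. U N)"
        by (intro tendsto_intros limU)
      then have "measure M (\<Union>N. A N) \<le> 1 - c * measure ?I (\<Union>N. U N)"
        using LIMSEQ_le[OF limA] le by blast
      also have "\<dots> \<le> 1 - c * p0"
        using ha UU S.c_nonneg c_def by (simp add: mult_left_mono)
      also have "\<dots> \<le> 1 - (\<delta>/4) * p0"
      proof -
        have "2*\<delta> - (2*\<delta>)^2/2 \<le> c" unfolding c_def using one_minus_exp_ge[of "2*\<delta>"] dpos by simp
        moreover have "\<delta>/4 \<le> 2*\<delta> - (2*\<delta>)^2/2" using dpos assms(7) by (simp add: power2_eq_square)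
        ultimately have "\<delta>/4 \<le> c" by linarith
        then have "(\<delta>/4) * p0 \<le> c * p0" using assms(2) by (rule mult_right_mono)
        then show ?thesis by linarith
      qed
      also have "\<dots> \<le> exp (- p0 * \<delta> / 4)" using fin by (simp add: mult.commute)
      finally show ?thesis unfolding target .
    qed
  qed
qed

end
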